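(* Let $(\Omega,\mathcal{F},\mathbb{P})$ be a nonatomic probability space and let $(\mathcal{X},\mathcal{X}^\ast)$ be a pair of law-invariant vector subspaces of $L^1$, each containing $L^\infty$, such that $XY\in L^1$ for all $X\in\mathcal{X}$ and $Y\in\mathcal{X}^\ast$. Let $\varphi:\mathcal{X}\to(-\infty,\infty]$ be proper, convex and $\sigma(\mathcal{X},\mathcal{X}^\ast)$-lower semicontinuous, and let $\mathcal{S}\subset\mathcal{X}$ be such that $\mathrm{span}(\mathcal{S})$ is $\sigma(\mathcal{X},\mathcal{X}^\ast)$-dense in $\mathcal{X}$. If $\varphi$ is affine along every element of $\mathcal{S}$, then $\varphi$ is affine on $\mathcal{X}$ and there exists a unique $Y\in\mathcal{X}^\ast$ such that $\varphi(X)=\mathbb{E}_{\mathbb{P}}[XY]+\varphi(0)$ for every $X\in\mathcal{X}$.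
   Context: $L^0$ denotes the space of real random variables on $(\Omega,\mathcal{F},\mathbb{P})$ modulo almost-sure equality. For $X,Y\in L^0$, $X\sim Y$ means same law under $\mathbb{P}$; a set $\mathcal{S}\subset L^0$ is law invariant if $X\in\mathcal{S}$ whenever $X\in L^0$ and $X\sim Y$ for some $Y\in\mathcal{S}$. $\sigma(\mathcal{X},\mathcal{X}^\ast)$ is the weakest linear topology on $\mathcal{X}$ for which $X\mapsto\mathbb{E}_{\mathbb{P}}[XY]$ is continuous for every $Y\in\mathcal{X}^\ast$. $\mathrm{span}(\mathcal{S})$ is the smallest linear subspace containing $\mathcal{S}$. For $\varphi:\mathcal{X}\to(-\infty,\infty]$: $\mathrm{dom}(\varphi)=\{X:\varphi(X)<\infty\}$; proper means $\mathrm{dom}(\varphi)\neq\emptyset$; $\sigma(\mathcal{X},\mathcal{X}^\ast)$-lower semicontinuous means $\varphi(X)\le\liminf_\alpha\varphi(X_\alpha)$ for every net $X_\alpha\to X$ in $\sigma(\mathcal{X},\mathcal{X}^\ast)$. $\varphi$ is affine along an element $Z$ if $mZ\in\mathrm{dom}(\varphi)$ for all $m\in\mathbb{R}$ and $m\mapsto\varphi(mZ)-\varphi(0)$ is linear, i.e. $\varphi(mZ)=am+\varphi(0)$ for some $a\in\mathbb{R}$; $\varphi$ is affine on $\mathcal{X}$ if $\varphi$ is finite on $\mathcal{X}$ and $X\mapsto\varphi(X)-\varphi(0)$ is linear on $\mathcal{X}$. *)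

theory Defs
  imports "HOL-Probability.Probability"
begin

(* Random variables are represented by real functions on the sample space; L^0 classes
   are handled by requiring law invariance (which forces closure under a.e. equality)
   and by requiring phi to be constant on a.e.-classes. *)

definition nonatomic :: "'a measure \<Rightarrow> bool" where
  "nonatomic M \<longleftrightarrow> (\<forall>A\<in>sets M. 0 < measure M A \<longrightarrow>
      (\<exists>B\<in>sets M. B \<subseteq> A \<and> 0 < measure M B \<and> measure M B < measure M A))"

definition same_law :: "'a measure \<Rightarrow> ('a \<Rightarrow> real) \<Rightarrow> ('a \<Rightarrow> real) \<Rightarrow> bool" where
  "same_law M X Y \<longleftrightarrow> distr M borel X = distr M borel Y"

definition law_invariant :: "'a measure \<Rightarrow> ('a \<Rightarrow> real) set \<Rightarrow> bool" where
  "law_invariant M S \<longleftrightarrow> (\<forall>X Y. X \<in> borel_measurable M \<longrightarrow> Y \<in> S \<longrightarrow> same_law M X Y \<longrightarrow> X \<in> S)"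

definition lin_subspace :: "('a \<Rightarrow> real) set \<Rightarrow> bool" where
  "lin_subspace S \<longleftrightarrow> (\<lambda>_. 0) \<in> S \<and> (\<forall>X\<in>S. \<forall>Y\<in>S. (\<lambda>\<omega>. X \<omega> + Y \<omega>) \<in> S)
     \<and> (\<forall>c. \<forall>X\<in>S. (\<lambda>\<omega>. c * X \<omega>) \<in> S)"

definition Linfty :: "'a measure \<Rightarrow> ('a \<Rightarrow> real) set" where
  "Linfty M = {X \<in> borel_measurable M. \<exists>C. AE \<omega> in M. \<bar>X \<omega>\<bar> \<le> C}"

definition fspan :: "('a \<Rightarrow> real) set \<Rightarrow> ('a \<Rightarrow> real) set" where
  "fspan S = {(\<lambda>\<omega>. \<Sum>i<n. c i * Z i \<omega>) | (n::nat) c Z. \<forall>i<n. Z i \<in> S}"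

definition weak_conv :: "'a measure \<Rightarrow> ('a \<Rightarrow> real) set \<Rightarrow> ('a \<Rightarrow> real) filter \<Rightarrow> ('a \<Rightarrow> real) \<Rightarrow> bool" where
  "weak_conv M Xs F X \<longleftrightarrow> (\<forall>Y\<in>Xs. ((\<lambda>X'. integral\<^sup>L M (\<lambda>\<omega>. X' \<omega> * Y \<omega>))
        \<longlongrightarrow> integral\<^sup>L M (\<lambda>\<omega>. X \<omega> * Y \<omega>)) F)"

definition weakly_dense :: "'a measure \<Rightarrow> ('a \<Rightarrow> real) set \<Rightarrow> ('a \<Rightarrow> real) set \<Rightarrow> ('a \<Rightarrow> real) set \<Rightarrow> bool" where
  "weakly_dense M X Xs T \<longleftrightarrow> (\<forall>x\<in>X. \<exists>F. F \<noteq> bot \<and> eventually (\<lambda>x'. x' \<in> T) F \<and> weak_conv M Xs F x)"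

definition weakly_lsc :: "'a measure \<Rightarrow> ('a \<Rightarrow> real) set \<Rightarrow> ('a \<Rightarrow> real) set \<Rightarrow> (('a \<Rightarrow> real) \<Rightarrow> ereal) \<Rightarrow> bool" where
  "weakly_lsc M X Xs \<phi> \<longleftrightarrow> (\<forall>F x. x \<in> X \<longrightarrow> eventually (\<lambda>x'. x' \<in> X) F \<longrightarrow> weak_conv M Xs F x
      \<longrightarrow> \<phi> x \<le> Liminf F \<phi>)"

definition proper_on :: "('a \<Rightarrow> real) set \<Rightarrow> (('a \<Rightarrow> real) \<Rightarrow> ereal) \<Rightarrow> bool" where
  "proper_on X \<phi> \<longleftrightarrow> (\<exists>x\<in>X. \<phi> x < \<infinity>)"

definition convex_on_fs :: "('a \<Rightarrow> real) set \<Rightarrow> (('a \<Rightarrow> real) \<Rightarrow> ereal) \<Rightarrow> bool" where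
  "convex_on_fs X \<phi> \<longleftrightarrow> (\<forall>x\<in>X. \<forall>y\<in>X. \<forall>t::real. 0 < t \<longrightarrow> t < 1 \<longrightarrow>
      \<phi> (\<lambda>\<omega>. t * x \<omega> + (1 - t) * y \<omega>) \<le> ereal t * \<phi> x + ereal (1 - t) * \<phi> y)"

definition affine_along :: "(('a \<Rightarrow> real) \<Rightarrow> ereal) \<Rightarrow> ('a \<Rightarrow> real) \<Rightarrow> bool" where
  "affine_along \<phi> Z \<longleftrightarrow> (\<forall>m::real. \<phi> (\<lambda>\<omega>. m * Z \<omega>) < \<infinity>) \<and>
      (\<exists>a::real. \<forall>m::real. \<phi> (\<lambda>\<omega>. m * Z \<omega>) = ereal (a * m) + \<phi> (\<lambda>_. 0))"

definition affine_on_fs :: "('a \<Rightarrow> real) set \<Rightarrow> (('a \<Rightarrow> real) \<Rightarrow> ereal) \<Rightarrow> bool" where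
  "affine_on_fs X \<phi> \<longleftrightarrow> (\<forall>x\<in>X. \<bar>\<phi> x\<bar> < \<infinity>) \<and>
     (\<forall>x\<in>X. \<forall>y\<in>X. \<forall>a b::real.
        real_of_ereal (\<phi> (\<lambda>\<omega>. a * x \<omega> + b * y \<omega>)) - real_of_ereal (\<phi> (\<lambda>_. 0))
        = a * (real_of_ereal (\<phi> x) - real_of_ereal (\<phi> (\<lambda>_. 0)))
          + b * (real_of_ereal (\<phi> y) - real_of_ereal (\<phi> (\<lambda>_. 0))))"

end

theory Submission
  imports Defs
begin

lemma lin_comb:
  assumes "lin_subspace S" "u \<in> S" "w \<in> S"
  shows "(\<lambda>\<omega>. a * u \<omega> + b * w \<omega>) \<in> S"
  using assms unfolding lin_subspace_def by auto

lemma lin_sum: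
  fixes n :: nat
  assumes "lin_subspace S" "\<forall>i<n. Z i \<in> S"
  shows "(\<lambda>\<omega>. \<Sum>i<n. c i * Z i \<omega>) \<in> S"
  using assms(2)
proof (induction n)
  case 0 then show ?case using assms(1) unfolding lin_subspace_def by simp
next
  case (Suc n)
  have "(\<lambda>\<omega>. 1 * (\<Sum>i<n. c i * Z i \<omega>) + c n * Z n \<omega>) \<in> S"
    using Suc by (intro lin_comb[OF assms(1)]) auto
  then show ?case by simp
qed

lemma kernel:
  fixes V :: "('a\<Rightarrow>real) set" and L :: "('a\<Rightarrow>real)\<Rightarrow>real" and f :: "nat \<Rightarrow> ('a\<Rightarrow>real) \<Rightarrow> real"
  assumes V: "\<forall>u\<in>V. \<forall>w\<in>V. \<forall>a b. (\<lambda>\<omega>. a*u \<omega> + b*w \<omega>) \<in> V"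
  and f: "\<forall>i<n. \<forall>u\<in>V. \<forall>w\<in>V. \<forall>a b. f i (\<lambda>\<omega>. a*u \<omega> + b*w \<omega>) = a*f i u + b*f i w"
  shows "\<forall>L. (\<forall>u\<in>V. \<forall>w\<in>V. \<forall>a b. L (\<lambda>\<omega>. a*u \<omega> + b*w \<omega>) = a*L u + b*L w)
     \<longrightarrow> (\<forall>v\<in>V. (\<forall>i<n. f i v = 0) \<longrightarrow> L v = 0)
     \<longrightarrow> (\<exists>lam. \<forall>v\<in>V. L v = (\<Sum>i<n. lam i * f i v))"
  using f
proof (induction n)
  case 0 then show ?case by simp
next
  case (Suc n)
  show ?case
  proof (intro allI impI)
    fix L assume L: "\<forall>u\<in>V. \<forall>w\<in>V. \<forall>a b. L (\<lambda>\<omega>. a*u \<omega> + b*w \<omega>) = a*L u + b*L w"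
      and K: "\<forall>v\<in>V. (\<forall>i<Suc n. f i v = 0) \<longrightarrow> L v = 0"
    have IH: "\<forall>L. (\<forall>u\<in>V. \<forall>w\<in>V. \<forall>a b. L (\<lambda>\<omega>. a*u \<omega> + b*w \<omega>) = a*L u + b*L w)
     \<longrightarrow> (\<forall>v\<in>V. (\<forall>i<n. f i v = 0) \<longrightarrow> L v = 0)
     \<longrightarrow> (\<exists>lam. \<forall>v\<in>V. L v = (\<Sum>i<n. lam i * f i v))" using Suc by auto
    show "\<exists>lam. \<forall>v\<in>V. L v = (\<Sum>i<Suc n. lam i * f i v)"
    proof (cases "\<forall>v\<in>V. (\<forall>i<n. f i v = 0) \<longrightarrow> f n v = 0")
      case True
      then have "\<forall>v\<in>V. (\<forall>i<n. f i v = 0) \<longrightarrow> L v = 0" using K less_Suc_eq by auto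
      then obtain lam where lam: "\<forall>v\<in>V. L v = (\<Sum>i<n. lam i * f i v)" using IH L by blast
      show ?thesis
        by (rule exI[of _ "lam(n:=0)"]) (simp add: lam)
    next
      case False
      then obtain w where w: "w \<in> V" "\<forall>i<n. f i w = 0" "f n w \<noteq> 0" by auto
      define L' where "L' v = L v - (L w / f n w) * f n v" for v
      have L'lin: "\<forall>u\<in>V. \<forall>w\<in>V. \<forall>a b. L' (\<lambda>\<omega>. a*u \<omega> + b*w \<omega>) = a*L' u + b*L' w"
        using L Suc.prems by (simp add: L'_def algebra_simps)
      have "\<forall>v\<in>V. (\<forall>i<n. f i v = 0) \<longrightarrow> L' v = 0"
      proof (intro ballI impI)
        fix v assume v: "v \<in> V" "\<forall>i<n. f i v = 0"
        define v' where "v' = (\<lambda>\<omega>. 1 * v \<omega> + (- (f n v / f n w)) * w \<omega>)"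
        have v'V: "v' \<in> V" using V v w unfolding v'_def by blast
        have "f i v' = 1 * f i v + (- (f n v / f n w)) * f i w" if "i < Suc n" for i
          using Suc.prems[rule_format, of i v w 1 "- (f n v / f n w)"] that v w unfolding v'_def by simp
        then have "\<forall>i<Suc n. f i v' = 0"
          using v w by (auto simp: less_Suc_eq)
        then have "L v' = 0" using K v'V by blast
        moreover have "L v' = L v - (f n v / f n w) * L w"
          using L[rule_format, of v w 1 "- (f n v / f n w)"] v w unfolding v'_def by simp
        ultimately show "L' v = 0" unfolding L'_def by (simp add: field_simps)
      qed
      then obtain lam where lam: "\<forall>v\<in>V. L' v = (\<Sum>i<n. lam i * f i v)" using IH L'lin by blast
      show ?thesis
        by (rule exI[of _ "lam(n:=L w / f n w)"]) (use lam in \<open>simp add: L'_def algebra_simps\<close>)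
    qed
  qed
qed

lemma concat_sum:
  fixes f g :: "nat \<Rightarrow> 'b::comm_monoid_add"
  shows "(\<Sum>k<n+m. (if k<n then f k else g (k-n))) = (\<Sum>k<n. f k) + (\<Sum>j<m. g j)"
proof (induction m)
  case 0
  have "(\<Sum>k<n. (if k<n then f k else g (k-n))) = (\<Sum>k<n. f k)" by (rule sum.cong) auto
  then show ?case by simp
next
  case (Suc m) then show ?case by (simp add: add.assoc)
qed

lemma half_ereal:
  fixes a b :: ereal
  assumes "a \<noteq> -\<infinity>" "a \<le> ereal p" "b \<noteq> -\<infinity>" "b \<le> ereal q"
  shows "ereal (1/2) * a + ereal (1/2) * b \<le> ereal ((p+q)/2)"
proof -
  obtain a' where a: "a = ereal a'" "a' \<le> p" using assms(1,2) by (cases a) auto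
  obtain b' where b: "b = ereal b'" "b' \<le> q" using assms(3,4) by (cases b) auto
  show ?thesis using a b by simp
qed

lemma low_ereal:
  fixes a b :: ereal
  assumes "a \<noteq> -\<infinity>" "b \<le> ereal q" "ereal r \<le> ereal (1/2) * a + ereal (1/2) * b"
  shows "ereal (2*r - q) \<le> a"
proof (cases a)
  case (real a')
  show ?thesis
  proof (cases b)
    case (real b')
    then show ?thesis using assms \<open>a = ereal a'\<close> by simp
  next
    case PInf then show ?thesis using assms by simp
  next
    case MInf then show ?thesis using assms \<open>a = ereal a'\<close> by simp
  qed
next
  case PInf then show ?thesis by simp
next
  case MInf then show ?thesis using assms by simp
qed

lemma abs_zero:
  fixes d :: "'a \<Rightarrow> real"
  assumes "integrable M d" "integral\<^sup>L M (\<lambda>\<omega>. d \<omega> * sgn (d \<omega>)) = 0"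
  shows "AE \<omega> in M. d \<omega> = 0"
proof -
  have e: "(\<lambda>\<omega>. d \<omega> * sgn (d \<omega>)) = (\<lambda>\<omega>. \<bar>d \<omega>\<bar>)"
    by (rule ext) (simp add: abs_if sgn_if)
  have "integral\<^sup>L M (\<lambda>\<omega>. \<bar>d \<omega>\<bar>) = 0" using assms(2) e by simp
  then have "AE \<omega> in M. \<bar>d \<omega>\<bar> = 0"
    using integral_nonneg_eq_0_iff_AE[of M "\<lambda>\<omega>. \<bar>d \<omega>\<bar>"] assms(1) by auto
  then show ?thesis by auto
qed

lemma sgn_Linfty:
  fixes d :: "'a \<Rightarrow> real"
  assumes "d \<in> borel_measurable M"
  shows "(\<lambda>\<omega>. sgn (d \<omega>)) \<in> Linfty M"
proof -
  have m: "(\<lambda>\<omega>. sgn (d \<omega>)) \<in> borel_measurable M" using assms by measurable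
  have "\<forall>\<omega>. \<bar>sgn (d \<omega>)\<bar> \<le> (1::real)" by (simp add: abs_sgn_eq)
  then have "\<exists>C. AE \<omega> in M. \<bar>sgn (d \<omega>)\<bar> \<le> C" by blast
  then show ?thesis unfolding Linfty_def using m by blast
qed

theorem corollary3p6:
  fixes M :: "'a measure" and X Xs S :: "('a \<Rightarrow> real) set"
    and \<phi> :: "('a \<Rightarrow> real) \<Rightarrow> ereal"
  assumes "prob_space M" and "nonatomic M"
    and "lin_subspace X" and "lin_subspace Xs"
    and "law_invariant M X" and "law_invariant M Xs"
    and "Linfty M \<subseteq> X" and "Linfty M \<subseteq> Xs"
    and "\<forall>x\<in>X. integrable M x" and "\<forall>y\<in>Xs. integrable M y"
    and "\<forall>x\<in>X. \<forall>y\<in>Xs. integrable M (\<lambda>\<omega>. x \<omega> * y \<omega>)"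
    and "\<forall>x\<in>X. \<phi> x \<noteq> -\<infinity>"
    and "\<forall>x\<in>X. \<forall>x'\<in>X. (AE \<omega> in M. x \<omega> = x' \<omega>) \<longrightarrow> \<phi> x = \<phi> x'"
    and "proper_on X \<phi>" and "convex_on_fs X \<phi>" and "weakly_lsc M X Xs \<phi>"
    and "S \<subseteq> X" and "weakly_dense M X Xs (fspan S)"
    and "\<forall>z\<in>S. affine_along \<phi> z"
  shows "affine_on_fs X \<phi> \<and>
    (\<exists>y\<in>Xs. (\<forall>x\<in>X. \<phi> x = ereal (integral\<^sup>L M (\<lambda>\<omega>. x \<omega> * y \<omega>)) + \<phi> (\<lambda>_. 0)) \<and>
       (\<forall>y'\<in>Xs. (\<forall>x\<in>X. \<phi> x = ereal (integral\<^sup>L M (\<lambda>\<omega>. x \<omega> * y' \<omega>)) + \<phi> (\<lambda>_. 0))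
          \<longrightarrow> (AE \<omega> in M. y' \<omega> = y \<omega>)))"
proof -
  define E where "E x y = integral\<^sup>L M (\<lambda>\<omega>. x \<omega> * y \<omega>)" for x y :: "'a \<Rightarrow> real"
  note lsc = assms(16)[unfolded weakly_lsc_def, rule_format]
  have X0: "(\<lambda>_. 0) \<in> X" using assms(3) unfolding lin_subspace_def by auto
  have Xcomb: "(\<lambda>\<omega>. a*u \<omega> + b*w \<omega>) \<in> X" if "u\<in>X" "w\<in>X" for u w a b
    using lin_comb[OF assms(3)] that by blast
  have Xscomb: "(\<lambda>\<omega>. a*u \<omega> + b*w \<omega>) \<in> Xs" if "u\<in>Xs" "w\<in>Xs" for u w a b
    using lin_comb[OF assms(4)] that by blast
  have intXY: "integrable M (\<lambda>\<omega>. x \<omega> * y \<omega>)" if "x\<in>X" "y\<in>Xs" for x y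
    using assms(11) that by blast
  have Elin: "E (\<lambda>\<omega>. a*u \<omega> + b*w \<omega>) y = a * E u y + b * E w y" if "u\<in>X" "w\<in>X" "y\<in>Xs" for u w y a b
  proof -
    have "(\<lambda>\<omega>. (a*u \<omega> + b*w \<omega>) * y \<omega>) = (\<lambda>\<omega>. a*(u \<omega> * y \<omega>) + b*(w \<omega> * y \<omega>))"
      by (auto simp: algebra_simps)
    then show ?thesis unfolding E_def using intXY[OF that(1,3)] intXY[OF that(2,3)] by simp
  qed
  have Xmeas: "x \<in> borel_measurable M" if "x \<in> X" for x using assms(9) that by auto
  have Xsmeas: "y \<in> borel_measurable M" if "y \<in> Xs" for y using assms(10) that by auto
  have phi0fin: "\<phi> (\<lambda>_. 0) < \<infinity>"
  proof (cases "S = {}")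
    case True
    obtain x0 where x0: "x0 \<in> X" "\<phi> x0 < \<infinity>" using assms(14) unfolding proper_on_def by auto
    obtain F where F: "F \<noteq> bot" "eventually (\<lambda>x'. x' \<in> fspan S) F" "weak_conv M Xs F x0"
      using bspec[OF assms(18)[unfolded weakly_dense_def] x0(1)] by blast
    have fs: "fspan S \<subseteq> {\<lambda>_. 0}"
    proof
      fix v assume "v \<in> fspan S"
      then obtain n c Z where v: "v = (\<lambda>\<omega>. \<Sum>i<(n::nat). c i * Z i \<omega>)" "\<forall>i<n. Z i \<in> S"
        unfolding fspan_def by blast
      have "n = 0" using v(2) True by (cases n) auto
      then show "v \<in> {\<lambda>_. 0}" using v by simp
    qed
    define y where "y = (\<lambda>\<omega>. sgn (x0 \<omega>))"
    have yXs: "y \<in> Xs" using sgn_Linfty[OF Xmeas[OF x0(1)]] assms(8) unfolding y_def by blast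
    have t1: "((\<lambda>X'. E X' y) \<longlongrightarrow> E x0 y) F" using F(3) yXs unfolding weak_conv_def E_def by blast
    have "eventually (\<lambda>X'. E X' y = 0) F" using F(2) by (rule eventually_mono) (use fs in \<open>auto simp: E_def\<close>)
    then have t2: "((\<lambda>X'. E X' y) \<longlongrightarrow> 0) F" by (simp add: tendsto_eventually)
    have "E x0 y = 0" using tendsto_unique[OF F(1) t1 t2] .
    moreover have "integrable M x0" using assms(9) x0(1) by blast
    ultimately have "AE \<omega> in M. x0 \<omega> = 0" by (intro abs_zero) (auto simp: E_def y_def)
    then have "\<phi> x0 = \<phi> (\<lambda>_. 0)" by (rule assms(13)[rule_format, OF x0(1) X0])
    then show ?thesis using x0 by simp
  next
    case False
    then obtain z where z: "z \<in> S" by auto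
    have "\<phi> (\<lambda>\<omega>. 0 * z \<omega>) < \<infinity>" using assms(19) z unfolding affine_along_def by blast
    then show ?thesis by simp
  qed
  obtain r0 where r0: "\<phi> (\<lambda>_. 0) = ereal r0" using phi0fin assms(12) X0 by (cases "\<phi> (\<lambda>_. 0)") auto
  define A where "A z = (SOME a. \<forall>m. \<phi> (\<lambda>\<omega>. m * z \<omega>) = ereal (a * m) + \<phi> (\<lambda>_. 0))" for z
  have Aeq: "\<phi> (\<lambda>\<omega>. m * z \<omega>) = ereal (A z * m + r0)" if "z \<in> S" for z m
  proof -
    have "\<exists>a. \<forall>m. \<phi> (\<lambda>\<omega>. m * z \<omega>) = ereal (a * m) + \<phi> (\<lambda>_. 0)"
      using assms(19) that unfolding affine_along_def by blast
    then have "\<forall>m. \<phi> (\<lambda>\<omega>. m * z \<omega>) = ereal (A z * m) + \<phi> (\<lambda>_. 0)"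
      unfolding A_def by (rule someI_ex)
    then show ?thesis using r0 by simp
  qed
  have SX: "z \<in> X" if "z \<in> S" for z using assms(17) that by blast
  have sumX: "(\<lambda>\<omega>. \<Sum>i<n. c i * Z i \<omega>) \<in> X" if "\<forall>i<n. Z i \<in> S" for n :: nat and c Z
    using lin_sum[OF assms(3)] that SX by blast
  have cvx: "\<phi> (\<lambda>\<omega>. t * x \<omega> + (1 - t) * y \<omega>) \<le> ereal t * \<phi> x + ereal (1 - t) * \<phi> y"
    if "x \<in> X" "y \<in> X" "0 < t" "t < 1" for x y t
    using assms(15) that unfolding convex_on_fs_def by blast
  have e12: "(1::real) - 1/2 = 1/2" by simp
  have half: "\<phi> (\<lambda>\<omega>. (1/2) * x \<omega> + (1/2) * y \<omega>) \<le> ereal ((p+q)/2)"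
    if "x \<in> X" "y \<in> X" "\<phi> x \<le> ereal p" "\<phi> y \<le> ereal q" for x y p q
  proof -
    have "\<phi> (\<lambda>\<omega>. (1/2) * x \<omega> + (1 - 1/2) * y \<omega>) \<le> ereal (1/2) * \<phi> x + ereal (1 - 1/2) * \<phi> y"
      by (rule cvx[OF that(1,2)]) simp_all
    also have "\<dots> = ereal (1/2) * \<phi> x + ereal (1/2) * \<phi> y" by simp
    also have "\<dots> \<le> ereal ((p+q)/2)"
      using half_ereal[of "\<phi> x" p "\<phi> y" q] that assms(12) by simp
    finally show ?thesis by (simp add: e12)
  qed
  have upper: "\<forall>c Z. (\<forall>i<n. Z i \<in> S) \<longrightarrow>
      \<phi> (\<lambda>\<omega>. \<Sum>i<n. c i * Z i \<omega>) \<le> ereal ((\<Sum>i<n. c i * A (Z i)) + r0)" for n :: nat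
  proof (induction n)
    case 0 then show ?case using r0 by simp
  next
    case (Suc n)
    show ?case
    proof (intro allI impI)
      fix c Z assume Z: "\<forall>i<Suc n. Z i \<in> S"
      define u where "u = (\<lambda>\<omega>. \<Sum>i<n. (2 * c i) * Z i \<omega>)"
      define w where "w = (\<lambda>\<omega>. (2 * c n) * Z n \<omega>)"
      have uX: "u \<in> X" unfolding u_def using sumX Z by simp
      have wX: "w \<in> X" unfolding w_def using Xcomb[OF SX SX, of "Z n" "Z n" "2 * c n" 0] Z by simp
      have pu: "\<phi> u \<le> ereal ((\<Sum>i<n. (2 * c i) * A (Z i)) + r0)"
        using Suc.IH Z unfolding u_def by simp
      have pw: "\<phi> w \<le> ereal (A (Z n) * (2 * c n) + r0)"
        using Aeq[of "Z n" "2 * c n"] Z unfolding w_def by simp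
      have fe: "(\<lambda>\<omega>. (1/2) * u \<omega> + (1/2) * w \<omega>) = (\<lambda>\<omega>. \<Sum>i<Suc n. c i * Z i \<omega>)"
        unfolding u_def w_def by (rule ext) (simp add: sum_distrib_left algebra_simps)
      have eqn: "(((\<Sum>i<n. (2 * c i) * A (Z i)) + r0) + (A (Z n) * (2 * c n) + r0)) / 2
          = (\<Sum>i<Suc n. c i * A (Z i)) + r0"
      proof -
        have "(\<Sum>i<n. (2 * c i) * A (Z i)) = 2 * (\<Sum>i<n. c i * A (Z i))"
          by (simp add: sum_distrib_left algebra_simps)
        then show ?thesis by (simp add: algebra_simps)
      qed
      show "\<phi> (\<lambda>\<omega>. \<Sum>i<Suc n. c i * Z i \<omega>) \<le> ereal ((\<Sum>i<Suc n. c i * A (Z i)) + r0)"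
        using half[OF uX wX pu pw] unfolding fe eqn .
    qed
  qed
  have rep: "\<phi> (\<lambda>\<omega>. \<Sum>i<n. c i * Z i \<omega>) = ereal ((\<Sum>i<n. c i * A (Z i)) + r0)"
    if Z: "\<forall>i<n. Z i \<in> S" for n :: nat and c Z
  proof -
    define v where "v = (\<lambda>\<omega>. \<Sum>i<n. c i * Z i \<omega>)"
    define mv where "mv = (\<lambda>\<omega>. \<Sum>i<n. (- c i) * Z i \<omega>)"
    have vX: "v \<in> X" unfolding v_def using sumX Z by simp
    have mvX: "mv \<in> X" unfolding mv_def using sumX[OF Z, of "\<lambda>i. - c i"] .
    have pv: "\<phi> v \<le> ereal ((\<Sum>i<n. c i * A (Z i)) + r0)" using spec[OF spec[OF upper[of n], of c], of Z] Z unfolding v_def by (rule mp)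
    have pmv: "\<phi> mv \<le> ereal ((\<Sum>i<n. (- c i) * A (Z i)) + r0)" using spec[OF spec[OF upper[of n], of "\<lambda>i. - c i"], of Z] Z unfolding mv_def by (rule mp)
    have fe: "(\<lambda>\<omega>. (1/2) * v \<omega> + (1 - 1/2) * mv \<omega>) = (\<lambda>_. 0)"
      unfolding v_def mv_def by (rule ext) (simp add: sum_negf algebra_simps)
    have "ereal r0 \<le> ereal (1/2) * \<phi> v + ereal (1/2) * \<phi> mv"
      using cvx[OF vX mvX, of "1/2"] fe r0 unfolding e12 by simp
    from low_ereal[OF _ pmv this] have "ereal (2 * r0 - ((\<Sum>i<n. (- c i) * A (Z i)) + r0)) \<le> \<phi> v"
      using assms(12) vX by blast
    moreover have "2 * r0 - ((\<Sum>i<n. (- c i) * A (Z i)) + r0) = (\<Sum>i<n. c i * A (Z i)) + r0"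
      by (simp add: sum_negf)
    ultimately have lo: "ereal ((\<Sum>i<n. c i * A (Z i)) + r0) \<le> \<phi> v" by metis
    show ?thesis using antisym[OF pv lo] unfolding v_def .
  qed
  define V where "V = fspan S"
  define L where "L v = real_of_ereal (\<phi> v) - r0" for v
  have Vrep: "v \<in> V \<longleftrightarrow> (\<exists>n c Z. v = (\<lambda>\<omega>. \<Sum>i<(n::nat). c i * Z i \<omega>) \<and> (\<forall>i<n. Z i \<in> S))" for v
    unfolding V_def fspan_def by blast
  have VX: "v \<in> X" if "v \<in> V" for v using that sumX unfolding Vrep by blast
  have phiV: "\<phi> v = ereal (L v + r0)" if vV: "v \<in> V" for v
  proof -
    obtain n c Z where v: "v = (\<lambda>\<omega>. \<Sum>i<(n::nat). c i * Z i \<omega>)" "\<forall>i<n. Z i \<in> S"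
      using vV Vrep by blast
    show ?thesis using rep[OF v(2), of c] v(1) by (simp add: L_def)
  qed
  have LV: "L v = (\<Sum>i<n. c i * A (Z i))" if "v = (\<lambda>\<omega>. \<Sum>i<(n::nat). c i * Z i \<omega>)" "\<forall>i<n. Z i \<in> S" for v n c Z
    using rep[OF that(2), of c] that(1) by (simp add: L_def)
  have Vlin: "(\<lambda>\<omega>. a*u \<omega> + b*w \<omega>) \<in> V \<and> L (\<lambda>\<omega>. a*u \<omega> + b*w \<omega>) = a * L u + b * L w"
    if uV: "u \<in> V" and wV: "w \<in> V" for u w a b
  proof -
    obtain n c Z where u: "u = (\<lambda>\<omega>. \<Sum>i<(n::nat). c i * Z i \<omega>)" "\<forall>i<n. Z i \<in> S"
      using uV Vrep by blast
    obtain m d W where w: "w = (\<lambda>\<omega>. \<Sum>i<(m::nat). d i * W i \<omega>)" "\<forall>i<m. W i \<in> S"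
      using wV Vrep by blast
    define e where "e k = (if k<n then a * c k else b * d (k-n))" for k
    define Z2 where "Z2 k = (if k<n then Z k else W (k-n))" for k
    have Z2S: "\<forall>k<n+m. Z2 k \<in> S" using u w unfolding Z2_def by auto
    have f1: "(\<lambda>\<omega>. a*u \<omega> + b*w \<omega>) = (\<lambda>\<omega>. \<Sum>k<n+m. e k * Z2 k \<omega>)"
    proof (rule ext)
      fix \<omega>
      have "(\<Sum>k<n+m. e k * Z2 k \<omega>) = (\<Sum>k<n+m. if k<n then a * c k * Z k \<omega> else b * d (k-n) * W (k-n) \<omega>)"
        by (rule sum.cong) (auto simp: e_def Z2_def)
      also have "\<dots> = (\<Sum>k<n. a * c k * Z k \<omega>) + (\<Sum>j<m. b * d j * W j \<omega>)"
        by (rule concat_sum[of n "\<lambda>k. a * c k * Z k \<omega>" "\<lambda>j. b * d j * W j \<omega>" m])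
      also have "\<dots> = a*u \<omega> + b*w \<omega>" by (simp add: u w sum_distrib_left mult.assoc)
      finally show "a*u \<omega> + b*w \<omega> = (\<Sum>k<n+m. e k * Z2 k \<omega>)" by simp
    qed
    have f2: "(\<Sum>k<n+m. e k * A (Z2 k)) = a * (\<Sum>i<n. c i * A (Z i)) + b * (\<Sum>j<m. d j * A (W j))"
    proof -
      have "(\<Sum>k<n+m. e k * A (Z2 k)) = (\<Sum>k<n+m. if k<n then a * c k * A (Z k) else b * d (k-n) * A (W (k-n)))"
        by (rule sum.cong) (auto simp: e_def Z2_def)
      also have "\<dots> = (\<Sum>k<n. a * c k * A (Z k)) + (\<Sum>j<m. b * d j * A (W j))"
        by (rule concat_sum[of n "\<lambda>k. a * c k * A (Z k)" "\<lambda>j. b * d j * A (W j)" m])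
      also have "\<dots> = a * (\<Sum>i<n. c i * A (Z i)) + b * (\<Sum>j<m. d j * A (W j))"
        by (simp add: sum_distrib_left mult.assoc)
      finally show ?thesis .
    qed
    have inV: "(\<lambda>\<omega>. a*u \<omega> + b*w \<omega>) \<in> V" unfolding Vrep using f1 Z2S by blast
    have "L (\<lambda>\<omega>. a*u \<omega> + b*w \<omega>) = (\<Sum>k<n+m. e k * A (Z2 k))" by (rule LV[OF f1 Z2S])
    also have "\<dots> = a * L u + b * L w" unfolding f2 LV[OF u] LV[OF w] ..
    finally show ?thesis using inV by blast
  qed
  define B where "B = {(ys, e). set ys \<subseteq> Xs \<and> (0::real) < e}"
  define U where "U b = {v \<in> V. \<forall>y\<in>set (fst b). \<bar>E v y\<bar> < snd b}" for b
  define N where "N = (INF b\<in>B. principal (U b))"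
  have evN: "eventually P N \<longleftrightarrow> (\<exists>b\<in>B. \<forall>v\<in>U b. P v)" for P
  proof -
    have "eventually P N \<longleftrightarrow> (\<exists>b\<in>B. eventually P (principal (U b)))"
      unfolding N_def
    proof (rule eventually_INF_base)
      have "([], 1) \<in> B" unfolding B_def by simp
      then show "B \<noteq> {}" by blast
    next
      fix a b assume ab: "a \<in> B" "b \<in> B"
      show "\<exists>x\<in>B. principal (U x) \<le> inf (principal (U a)) (principal (U b))"
      proof (rule bexI[of _ "(fst a @ fst b, min (snd a) (snd b))"])
        show "(fst a @ fst b, min (snd a) (snd b)) \<in> B" using ab unfolding B_def by auto
        show "principal (U (fst a @ fst b, min (snd a) (snd b))) \<le> inf (principal (U a)) (principal (U b))"
          unfolding U_def by auto
      qed
    qed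
    then show ?thesis by (simp add: eventually_principal)
  qed
  have N_X: "eventually (\<lambda>x'. x' \<in> X) N"
    unfolding evN by (rule bexI[of _ "([],1)"]) (use VX in \<open>auto simp: B_def U_def\<close>)
  have N_conv: "weak_conv M Xs N (\<lambda>_. 0)"
    unfolding weak_conv_def
  proof
    fix y assume y: "y \<in> Xs"
    show "((\<lambda>X'. integral\<^sup>L M (\<lambda>\<omega>. X' \<omega> * y \<omega>)) \<longlongrightarrow> integral\<^sup>L M (\<lambda>\<omega>. 0 * y \<omega>)) N"
      unfolding tendsto_iff
    proof (intro allI impI)
      fix e :: real assume e: "0 < e"
      show "eventually (\<lambda>X'. dist (integral\<^sup>L M (\<lambda>\<omega>. X' \<omega> * y \<omega>)) (integral\<^sup>L M (\<lambda>\<omega>. 0 * y \<omega>)) < e) N"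
        unfolding evN by (rule bexI[of _ "([y], e)"]) (use y e in \<open>auto simp: B_def U_def E_def\<close>)
    qed
  qed
  have "\<phi> (\<lambda>_. 0) \<le> Liminf N \<phi>" by (rule lsc[OF X0 N_X N_conv])
  moreover have "ereal (r0 - 1) < ereal r0" by simp
  ultimately have "ereal (r0 - 1) < Liminf N \<phi>" using r0 by (metis less_le_trans)
  then obtain P where P: "eventually P N" "ereal (r0-1) < (INF x\<in>Collect P. \<phi> x)"
    unfolding Liminf_def less_SUP_iff by auto
  then obtain b where b: "b \<in> B" "\<forall>v\<in>U b. P v" using evN by blast
  have Lb: "L v > -1" if vU: "v \<in> U b" for v
  proof -
    have "P v" using b vU by blast
    then have "ereal (r0-1) < \<phi> v" using P(2) by (auto simp: less_INF_D)
    moreover have "v \<in> V" using vU unfolding U_def by blast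
    ultimately show ?thesis using phiV by simp
  qed
  obtain ys e where ysb: "b = (ys, e)" "set ys \<subseteq> Xs" "0 < e" using b(1) unfolding B_def by auto
  have ysX: "ys ! i \<in> Xs" if "i < length ys" for i using ysb(2) nth_mem that by blast
  have K: "\<forall>v\<in>V. (\<forall>i<length ys. E v (ys!i) = 0) \<longrightarrow> L v = 0"
  proof (intro ballI impI)
    fix v assume v: "v\<in>V" "\<forall>i<length ys. E v (ys!i) = 0"
    show "L v = 0"
    proof (rule ccontr)
      assume nz: "L v \<noteq> 0"
      define t where "t = -2 / L v"
      have tv: "(\<lambda>\<omega>. t * v \<omega> + 0 * v \<omega>) \<in> V \<and> L (\<lambda>\<omega>. t * v \<omega> + 0 * v \<omega>) = t * L v + 0 * L v"
        using Vlin v(1) by blast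
      have "\<forall>y\<in>set ys. E (\<lambda>\<omega>. t * v \<omega> + 0 * v \<omega>) y = 0"
      proof
        fix y assume "y \<in> set ys"
        then obtain i where i: "i < length ys" "y = ys ! i" by (auto simp: in_set_conv_nth)
        show "E (\<lambda>\<omega>. t * v \<omega> + 0 * v \<omega>) y = 0"
          using Elin[OF VX[OF v(1)] VX[OF v(1)] ysX[OF i(1)], of t 0] v(2) i by simp
      qed
      then have "(\<lambda>\<omega>. t * v \<omega> + 0 * v \<omega>) \<in> U b" using tv ysb unfolding U_def by auto
      then have "L (\<lambda>\<omega>. t * v \<omega> + 0 * v \<omega>) > -1" by (rule Lb)
      moreover have "t * L v = -2" using nz unfolding t_def by simp
      ultimately show False using tv by simp
    qed
  qed
  have kV: "\<forall>u\<in>V. \<forall>w\<in>V. \<forall>a b. (\<lambda>\<omega>. a*u \<omega> + b*w \<omega>) \<in> V" using Vlin by blast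
  have kf: "\<forall>i<length ys. \<forall>u\<in>V. \<forall>w\<in>V. \<forall>a b. E (\<lambda>\<omega>. a*u \<omega> + b*w \<omega>) (ys!i) = a * E u (ys!i) + b * E w (ys!i)"
    using Elin VX ysX by blast
  have kL: "\<forall>u\<in>V. \<forall>w\<in>V. \<forall>a b. L (\<lambda>\<omega>. a*u \<omega> + b*w \<omega>) = a*L u + b*L w" using Vlin by blast
  obtain lam where lam: "\<forall>v\<in>V. L v = (\<Sum>i<length ys. lam i * E v (ys!i))"
    using kernel[OF kV, of "length ys" "\<lambda>i v. E v (ys!i)"] kf kL K by blast
  define Y where "Y = (\<lambda>\<omega>. \<Sum>i<length ys. lam i * (ys!i) \<omega>)"
  have YXs: "Y \<in> Xs" unfolding Y_def using lin_sum[OF assms(4)] ysX by blast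
  have EY: "E x Y = (\<Sum>i<length ys. lam i * E x (ys!i))" if x: "x \<in> X" for x
  proof -
    have "(\<lambda>\<omega>. x \<omega> * Y \<omega>) = (\<lambda>\<omega>. \<Sum>i<length ys. lam i * (x \<omega> * (ys!i) \<omega>))"
      unfolding Y_def by (auto simp: sum_distrib_left algebra_simps)
    then have "E x Y = integral\<^sup>L M (\<lambda>\<omega>. \<Sum>i<length ys. lam i * (x \<omega> * (ys!i) \<omega>))" unfolding E_def by simp
    also have "\<dots> = (\<Sum>i<length ys. integral\<^sup>L M (\<lambda>\<omega>. lam i * (x \<omega> * (ys!i) \<omega>)))"
      by (rule Bochner_Integration.integral_sum[where f="\<lambda>i \<omega>. lam i * (x \<omega> * (ys!i) \<omega>)"]) (use intXY[OF x ysX] in auto)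
    also have "\<dots> = (\<Sum>i<length ys. lam i * E x (ys!i))" unfolding E_def by simp
    finally show ?thesis .
  qed
  have phiVY: "\<phi> v = ereal (E v Y + r0)" if vV: "v\<in>V" for v
    using phiV[OF vV] lam vV EY[OF VX[OF vV]] by simp
  have up: "\<phi> x \<le> ereal (E x Y + r0)" if x: "x \<in> X" for x
  proof -
    obtain F where F: "F \<noteq> bot" "eventually (\<lambda>x'. x' \<in> fspan S) F" "weak_conv M Xs F x"
      using bspec[OF assms(18)[unfolded weakly_dense_def] x] by blast
    have FV: "eventually (\<lambda>x'. x' \<in> V) F" using F(2) unfolding V_def .
    have FX: "eventually (\<lambda>x'. x' \<in> X) F" using FV by (rule eventually_mono) (rule VX)
    have "\<phi> x \<le> Liminf F \<phi>" by (rule lsc[OF x FX F(3)])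
    also have "Liminf F \<phi> = Liminf F (\<lambda>v. ereal (E v Y + r0))"
      by (rule Liminf_eq) (use FV in \<open>auto elim!: eventually_mono simp: phiVY\<close>)
    also have "\<dots> = ereal (E x Y + r0)"
    proof (rule lim_imp_Liminf)
      show "\<not> trivial_limit F" using F(1) by (simp add: trivial_limit_def)
      have "((\<lambda>v. E v Y) \<longlongrightarrow> E x Y) F" using F(3) YXs unfolding weak_conv_def E_def by blast
      then show "((\<lambda>v. ereal (E v Y + r0)) \<longlongrightarrow> ereal (E x Y + r0)) F" by (intro tendsto_intros)
    qed
    finally show ?thesis .
  qed
  have lo: "ereal (E x Y + r0) \<le> \<phi> x" if x: "x \<in> X" for x
  proof -
    define mx where "mx = (\<lambda>\<omega>. (-1) * x \<omega> + 0 * x \<omega>)"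
    have mxX: "mx \<in> X" using Xcomb[OF x x] unfolding mx_def by blast
    have "E mx Y = - E x Y" using Elin[OF x x YXs, of "-1" 0] unfolding mx_def by simp
    then have pm: "\<phi> mx \<le> ereal (- E x Y + r0)" using up[OF mxX] by simp
    have fe: "(\<lambda>\<omega>. (1/2) * x \<omega> + (1 - 1/2) * mx \<omega>) = (\<lambda>_. 0)" unfolding mx_def by auto
    have "ereal r0 \<le> ereal (1/2) * \<phi> x + ereal (1/2) * \<phi> mx"
      using cvx[OF x mxX, of "1/2"] fe r0 unfolding e12 by simp
    from low_ereal[OF _ pm this] have "ereal (2*r0 - (- E x Y + r0)) \<le> \<phi> x" using assms(12) x by blast
    moreover have "2*r0 - (- E x Y + r0) = E x Y + r0" by simp
    ultimately show ?thesis by metis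
  qed
  have repX: "\<phi> x = ereal (E x Y + r0)" if x: "x \<in> X" for x
    using up[OF x] lo[OF x] by (rule antisym)
  have aff: "affine_on_fs X \<phi>"
    unfolding affine_on_fs_def
  proof (intro conjI ballI allI)
    fix x assume "x \<in> X" then show "\<bar>\<phi> x\<bar> < \<infinity>" using repX by simp
  next
    fix x y a b assume xy: "x \<in> X" "y \<in> X"
    have "\<phi> (\<lambda>\<omega>. a * x \<omega> + b * y \<omega>) = ereal (a * E x Y + b * E y Y + r0)"
      using repX[OF Xcomb[OF xy]] Elin[OF xy YXs] by simp
    then show "real_of_ereal (\<phi> (\<lambda>\<omega>. a * x \<omega> + b * y \<omega>)) - real_of_ereal (\<phi> (\<lambda>_. 0))
        = a * (real_of_ereal (\<phi> x) - real_of_ereal (\<phi> (\<lambda>_. 0)))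
          + b * (real_of_ereal (\<phi> y) - real_of_ereal (\<phi> (\<lambda>_. 0)))"
      using repX[OF xy(1)] repX[OF xy(2)] r0 by (simp add: algebra_simps)
  qed
  show ?thesis
  proof (intro conjI aff bexI[of _ Y] ballI YXs impI)
    fix x assume "x \<in> X"
    then show "\<phi> x = ereal (integral\<^sup>L M (\<lambda>\<omega>. x \<omega> * Y \<omega>)) + \<phi> (\<lambda>_. 0)"
      using repX r0 unfolding E_def by simp
  next
    fix y' assume y': "y' \<in> Xs"
      and h: "\<forall>x\<in>X. \<phi> x = ereal (integral\<^sup>L M (\<lambda>\<omega>. x \<omega> * y' \<omega>)) + \<phi> (\<lambda>_. 0)"
    define d where "d = (\<lambda>\<omega>. y' \<omega> - Y \<omega>)"
    have dint: "integrable M d" using assms(10) y' YXs unfolding d_def by auto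
    define s where "s = (\<lambda>\<omega>. sgn (d \<omega>))"
    have sX: "s \<in> X" using sgn_Linfty[OF borel_measurable_integrable[OF dint]] assms(7) unfolding s_def by blast
    have "ereal (E s y') + ereal r0 = ereal (E s Y + r0)"
      using h[rule_format, OF sX] repX[OF sX] r0 unfolding E_def by simp
    then have eq: "E s y' = E s Y" by simp
    have "integral\<^sup>L M (\<lambda>\<omega>. d \<omega> * sgn (d \<omega>)) = integral\<^sup>L M (\<lambda>\<omega>. s \<omega> * y' \<omega> - s \<omega> * Y \<omega>)"
      unfolding d_def s_def by (simp add: algebra_simps)
    also have "\<dots> = E s y' - E s Y"
      unfolding E_def using intXY[OF sX y'] intXY[OF sX YXs] by simp
    finally have "integral\<^sup>L M (\<lambda>\<omega>. d \<omega> * sgn (d \<omega>)) = 0" using eq by simp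
    then have "AE \<omega> in M. d \<omega> = 0" by (rule abs_zero[OF dint])
    then show "AE \<omega> in M. y' \<omega> = Y \<omega>" unfolding d_def by auto
  qed
qed
end
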